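(* Under Assumptions 1 and 2 (stated in the context), the boundary $\partial\mathcal{K}_\beta:=\operatorname{cl}(\mathcal{K}_\beta)\setminus\mathcal{K}_\beta$ satisfies $\partial\mathcal{K}_\beta\subseteq\{K\in\mathcal{K}:\|\mathbf{T}_\infty(K)\|_{\mathcal{H}_\infty}=\beta\}$.
   Context: Let $A\in\mathbb{R}^{n\times n}$, $B\in\mathbb{R}^{n\times m}$, $B_w\in\mathbb{R}^{n\times n}$, $W:=B_wB_w^{\mathsf T}$. Let $Q_2\succeq0$, $R_2\succ0$, $Q_\infty\succ0$, $R_\infty\succ0$ be symmetric weight matrices and $\beta>0$. For $K\in\mathbb{R}^{m\times n}$ write $A_K:=A+BK$. Let $\mathcal{K}:=\{K: A_K \text{ Hurwitz}\}$. For $K\in\mathcal{K}$ let $\mathbf{T}_\infty(K)(s)=\begin{bmatrix}Q_\infty^{1/2}\\ R_\infty^{1/2}K\end{bmatrix}(sI-A_K)^{-1}B_w$ and $\|\cdot\|_{\mathcal{H}_\infty}$ the $\mathcal{H}_\infty$ norm. $\mathcal{K}_\beta:=\{K\in\mathcal{K}:\|\mathbf{T}_\infty(K)\|_{\mathcal{H}_\infty}<\beta\}$. Assumption 1: $(A,B)$ stabilizable, $(Q_2^{1/2},A)$ detectable, and $\beta>\beta^\ast:=\inf_{K\in\mathcal{K}}\|\mathbf{T}_\infty(K)\|_{\mathcal{H}_\infty}$. Assumption 2: $Q_2\succeq0$ and $W,Q_\infty,R_2,R_\infty$ positive definite. *)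

theory Defs
  imports "HOL-Analysis.Analysis"
begin

definition cmat :: "real^'c^'r \<Rightarrow> complex^'c^'r" where
  "cmat M = (\<chi> i j. complex_of_real (M $ i $ j))"

definition symmetric_mat :: "real^'n^'n \<Rightarrow> bool" where
  "symmetric_mat M \<longleftrightarrow> transpose M = M"

definition psd_mat :: "real^'n^'n \<Rightarrow> bool" where
  "psd_mat M \<longleftrightarrow> symmetric_mat M \<and> (\<forall>x. 0 \<le> x \<bullet> (M *v x))"

definition pd_mat :: "real^'n^'n \<Rightarrow> bool" where
  "pd_mat M \<longleftrightarrow> symmetric_mat M \<and> (\<forall>x. x \<noteq> 0 \<longrightarrow> 0 < x \<bullet> (M *v x))"

definition msqrt :: "real^'n^'n \<Rightarrow> real^'n^'n" where
  "msqrt Q = (THE S. psd_mat S \<and> S ** S = Q)"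

definition hurwitz :: "real^'n^'n \<Rightarrow> bool" where
  "hurwitz M \<longleftrightarrow> (\<forall>(c::complex) (v::complex^'n). v \<noteq> 0 \<and> cmat M *v v = c *s v \<longrightarrow> Re c < 0)"

definition stabilizable :: "real^'n^'n \<Rightarrow> real^'m^'n \<Rightarrow> bool" where
  "stabilizable A B \<longleftrightarrow> (\<exists>K::real^'n^'m. hurwitz (A + B ** K))"

definition detectable :: "real^'n^'p \<Rightarrow> real^'n^'n \<Rightarrow> bool" where
  "detectable C A \<longleftrightarrow> (\<exists>L::real^'p^'n. hurwitz (A + L ** C))"

definition stab_set :: "real^'n^'n \<Rightarrow> real^'m^'n \<Rightarrow> (real^'n^'m) set" where
  "stab_set A B = {K. hurwitz (A + B ** K)}"

text \<open>Stacked output matrix [Q^(1/2); R^(1/2) K], indexed by 'n + 'm.\<close>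
definition out_mat :: "real^'n^'n \<Rightarrow> real^'m^'m \<Rightarrow> real^'n^'m \<Rightarrow> real^'n^('n + 'm)" where
  "out_mat Qi Ri K = (\<chi> r. case r of Inl i \<Rightarrow> msqrt Qi $ i | Inr j \<Rightarrow> (msqrt Ri ** K) $ j)"

definition T_inf :: "real^'n^'n \<Rightarrow> real^'m^'n \<Rightarrow> real^'n^'n \<Rightarrow> real^'n^'n \<Rightarrow> real^'m^'m
    \<Rightarrow> real^'n^'m \<Rightarrow> complex \<Rightarrow> complex^'n^('n + 'm)" where
  "T_inf A B Bw Qi Ri K s =
     cmat (out_mat Qi Ri K) ** matrix_inv (mat s - cmat (A + B ** K)) ** cmat Bw"

text \<open>H-infinity norm: supremum over the imaginary axis of the largest singular value
  (= induced Euclidean operator norm) of the transfer matrix.\<close>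
definition hinf_norm :: "real^'n^'n \<Rightarrow> real^'m^'n \<Rightarrow> real^'n^'n \<Rightarrow> real^'n^'n \<Rightarrow> real^'m^'m
    \<Rightarrow> real^'n^'m \<Rightarrow> real" where
  "hinf_norm A B Bw Qi Ri K =
     (SUP \<omega>::real. onorm (\<lambda>v::complex^'n. T_inf A B Bw Qi Ri K (\<i> * complex_of_real \<omega>) *v v))"

definition K_beta :: "real^'n^'n \<Rightarrow> real^'m^'n \<Rightarrow> real^'n^'n \<Rightarrow> real^'n^'n \<Rightarrow> real^'m^'m
    \<Rightarrow> real \<Rightarrow> (real^'n^'m) set" where
  "K_beta A B Bw Qi Ri \<beta> = {K \<in> stab_set A B. hinf_norm A B Bw Qi Ri K < \<beta>}"

end

theory Submission
  imports Defs "HOL-Complex_Analysis.Great_Picard"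
begin

lemma mm_add_rdistrib: "((A::'a::semiring_1^'n^'m) + B) ** C = A ** C + B ** C"
  by (vector matrix_matrix_mult_def sum.distrib distrib_right)
lemma mm_diff_rdistrib: "((A::'a::ring_1^'n^'m) - B) ** C = A ** C - B ** C"
  by (vector matrix_matrix_mult_def sum_subtractf left_diff_distrib)
lemma mm_diff_ldistrib: "(A::'a::ring_1^'n^'m) ** (B - C) = A ** B - A ** C"
  by (vector matrix_matrix_mult_def sum_subtractf right_diff_distrib)
lemma transpose_add: "transpose ((A::'a::semiring_1^'n^'m) + B) = transpose A + transpose B"
  by (simp add: transpose_def vec_eq_iff)
lemma transpose_diff: "transpose ((A::'a::ring_1^'n^'m) - B) = transpose A - transpose B"
  by (simp add: transpose_def vec_eq_iff)
lemma transpose_zero[simp]: "transpose (0::'a::semiring_1^'n^'m) = 0"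
  by (simp add: transpose_def vec_eq_iff)
lemma mm_scaleR_right: "(A::'a::real_algebra_1^'n^'m) ** (k *\<^sub>R B) = k *\<^sub>R (A ** B)"
  by (simp add: matrix_scalar_ac scalar_matrix_assoc)
lemma mm_scaleR_left: "(k *\<^sub>R (A::'a::real_algebra_1^'n^'m)) ** B = k *\<^sub>R (A ** B)"
  by (simp add: scalar_matrix_assoc)
lemma scaleR_mv: "((k::real) *\<^sub>R (A::'a::real_algebra_1^'n^'m)) *v v = k *\<^sub>R (A *v v)"
  by (simp add: vec_eq_iff matrix_vector_mult_def scaleR_sum_right)
lemma mv_axis: "((N::'a::semiring_1^'n^'m) *v axis j 1) $ i = N $ i $ j"
  by (simp add: matrix_vector_mult_def axis_def if_distrib if_distribR sum.delta' cong: if_cong)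

lemma half_tri: "norm ((1/2::real) *\<^sub>R (a + b)) \<le> (1/2) * (norm a + norm b)"
  for a b :: "'a::real_normed_vector"
  using norm_triangle_ineq[of a b] by simp

lemma abel4: "(a::'a::ab_group_add) + b - (c + d) = a - c + (b - d)"
  by (simp add: algebra_simps)

lemma sym_inner:
  fixes P :: "real^'n^'n" assumes "transpose P = P"
  shows "x \<bullet> (P *v y) = y \<bullet> (P *v x)"
proof -
  have e: "P $ i $ j = P $ j $ i" for i j using assms by (metis transpose_def vec_lambda_beta)
  have "x \<bullet> (P *v y) = (\<Sum>i\<in>UNIV. \<Sum>j\<in>UNIV. x$i * P$i$j * y$j)"
    by (simp add: inner_vec_def matrix_vector_mult_def sum_distrib_left mult.assoc)
  also have "\<dots> = (\<Sum>j\<in>UNIV. \<Sum>i\<in>UNIV. x$i * P$i$j * y$j)" by (rule sum.swap)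
  also have "\<dots> = y \<bullet> (P *v x)"
    by (simp add: inner_vec_def matrix_vector_mult_def sum_distrib_left e mult_ac)
  finally show ?thesis .
qed

lemma psd_zero:
  fixes P :: "real^'n^'n"
  assumes sym: "transpose P = P" and ps: "\<forall>x. 0 \<le> x \<bullet> (P *v x)" and y0: "y \<bullet> (P *v y) = 0"
  shows "P *v y = 0"
proof -
  define z where "z = P *v y"
  define a where "a = z \<bullet> z"
  define b where "b = z \<bullet> (P *v z)"
  have b0: "0 \<le> b" using ps b_def by auto
  have a0: "0 \<le> a" by (simp add: a_def)
  have ex: "(y + t *\<^sub>R z) \<bullet> (P *v (y + t *\<^sub>R z)) = 2*t*a + t^2 * b" for t
  proof -
    have "y \<bullet> (P *v z) = a" using sym_inner[OF sym, of y z] by (simp add: a_def z_def)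
    then show ?thesis using y0
      by (simp add: algebra_simps inner_add_left inner_add_right matrix_vector_right_distrib
           matrix_vector_mult_scaleR a_def b_def power2_eq_square z_def)
  qed
  define t where "t = - a / (b + 1)"
  have "0 \<le> 2*t*a + t^2 * b" using ps ex by metis
  then have "0 \<le> (2*t*a + t^2 * b) * (b+1)^2" using b0 by simp
  also have "(2*t*a + t^2 * b) * (b+1)^2 = - (a^2 * (b + 2))"
  proof -
    have tb: "t * (b+1) = - a" using b0 by (simp add: t_def)
    have "(2*t*a + t^2 * b) * (b+1)^2 = 2*a*(t*(b+1))*(b+1) + (t*(b+1))^2 * b"
      by (simp add: power2_eq_square algebra_simps)
    also have "\<dots> = - (a^2 * (b + 2))" unfolding tb by (simp add: power2_eq_square algebra_simps)
    finally show ?thesis .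
  qed
  finally have "a^2 * (b+2) \<le> 0" by simp
  then have "a^2 \<le> 0" using b0 by (auto simp: mult_le_0_iff)
  then have "a = 0" by simp
  then show ?thesis by (simp add: a_def z_def)
qed

primrec sq_it :: "real^'n^'n \<Rightarrow> nat \<Rightarrow> real^'n^'n" where
  "sq_it X 0 = 0"
| "sq_it X (Suc k) = (1/2) *\<^sub>R (X + sq_it X k ** sq_it X k)"

declare sq_it.simps(2)[simp del]

lemma tendsto_matmul[tendsto_intros]:
  fixes f :: "'b \<Rightarrow> 'a::real_normed_algebra_1^'n^'m" and g :: "'b \<Rightarrow> 'a^'k^'n"
  assumes "(f \<longlongrightarrow> A) F" "(g \<longlongrightarrow> B) F"
  shows "((\<lambda>x. f x ** g x) \<longlongrightarrow> A ** B) F"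
  unfolding matrix_matrix_mult_def
  by (intro tendsto_vec_lambda tendsto_sum tendsto_mult tendsto_vec_nth assms)

lemma tendsto_mv[tendsto_intros]:
  fixes f :: "'b \<Rightarrow> 'a::real_normed_algebra_1^'n^'m" and g :: "'b \<Rightarrow> 'a^'n"
  assumes "(f \<longlongrightarrow> A) F" "(g \<longlongrightarrow> v) F"
  shows "((\<lambda>x. f x *v g x) \<longlongrightarrow> A *v v) F"
  unfolding matrix_vector_mult_def
  by (intro tendsto_vec_lambda tendsto_sum tendsto_mult tendsto_vec_nth assms)

lemma tendsto_transpose[tendsto_intros]:
  fixes f :: "'b \<Rightarrow> 'a::real_normed_algebra_1^'n^'m"
  assumes "(f \<longlongrightarrow> A) F"
  shows "((\<lambda>x. transpose (f x)) \<longlongrightarrow> transpose A) F"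
  unfolding transpose_def
  by (intro tendsto_vec_lambda tendsto_vec_nth assms)

lemma mat_norm_bound:
  fixes N :: "real^'n^'m"
  assumes "\<And>x. norm (N *v x) \<le> c * norm x"
  shows "norm N \<le> of_nat CARD('m) * of_nat CARD('n) * c"
proof -
  have e: "\<bar>N$i$j\<bar> \<le> c" for i j
  proof -
    have "\<bar>N$i$j\<bar> = \<bar>(N *v axis j 1)$i\<bar>" by (simp add: mv_axis)
    also have "\<dots> \<le> norm (N *v axis j 1)" by (rule component_le_norm_cart)
    also have "\<dots> \<le> c" using assms[of "axis j 1"] by (simp add: norm_axis_1)
    finally show ?thesis .
  qed
  have "norm N \<le> (\<Sum>i\<in>UNIV. norm (N$i))" unfolding norm_vec_def by (rule L2_set_le_sum) simp
  also have "\<dots> \<le> (\<Sum>i\<in>UNIV. (\<Sum>j\<in>UNIV. \<bar>N$i$j\<bar>))" by (intro sum_mono norm_le_l1_cart)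
  also have "\<dots> \<le> (\<Sum>i\<in>(UNIV::'m set). (\<Sum>j\<in>(UNIV::'n set). c))" by (intro sum_mono e)
  finally show ?thesis by simp
qed

lemma sq_fix:
  fixes X :: "real^'n^'n"
  assumes symX: "transpose X = X" and nX: "\<And>x. norm (X *v x) \<le> \<rho> * norm x"
    and \<rho>: "0 \<le> \<rho>" "\<rho> < 1"
  shows "\<exists>T r. transpose T = T \<and> T = (1/2) *\<^sub>R (X + T ** T) \<and> r < 1
           \<and> (\<forall>x. norm (T *v x) \<le> r * norm x)
           \<and> (\<forall>Y. Y ** X = X ** Y \<longrightarrow> Y ** T = T ** Y)"
proof -
  define r where "r = (1 + \<rho>)/2"
  have r0: "0 \<le> r" "r < 1" using \<rho> by (auto simp: r_def)
  have rr: "(\<rho> + r*r)/2 \<le> r"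
  proof -
    have e1: "1 - r = (1 - \<rho>)/2" by (simp add: r_def field_simps)
    have "(1 - \<rho>) * (1 - \<rho>) \<le> 1 * (1 - \<rho>)" using \<rho> by (intro mult_right_mono) auto
    then have "(1 - r)^2 \<le> 1 - \<rho>" unfolding e1 using \<rho> by (simp add: power2_eq_square field_simps)
    then show ?thesis by (simp add: power2_eq_square algebra_simps)
  qed
  let ?T = "sq_it X"
  have bnd: "norm (?T k *v x) \<le> r * norm x" for k x
  proof (induction k arbitrary: x)
    case 0 then show ?case using r0 by simp
  next
    case (Suc k)
    have "?T (Suc k) *v x = (1/2) *\<^sub>R (X *v x + ?T k *v (?T k *v x))"
      by (simp add: sq_it.simps(2) scaleR_mv matrix_vector_mult_add_rdistrib matrix_vector_mul_assoc)
    then have "norm (?T (Suc k) *v x) \<le> (1/2) * (norm (X *v x) + norm (?T k *v (?T k *v x)))"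
      by (simp add: norm_triangle_ineq)
    also have "\<dots> \<le> (1/2) * (\<rho> * norm x + r * (r * norm x))"
    proof -
      have "r * norm (?T k *v x) \<le> r * (r * norm x)" using Suc[of x] r0 by (simp add: mult_left_mono)
      then show ?thesis using nX[of x] Suc[of "?T k *v x"] by simp
    qed
    also have "\<dots> = ((\<rho> + r*r)/2) * norm x" by (simp add: algebra_simps)
    also have "\<dots> \<le> r * norm x" using rr by (intro mult_right_mono) auto
    finally show ?case .
  qed
  have sym: "transpose (?T k) = ?T k" for k
    by (induction k) (simp_all add: sq_it.simps(2) transpose_scalar transpose_add matrix_transpose_mul symX)
  have comm: "Y ** ?T k = ?T k ** Y" if "Y ** X = X ** Y" for Y k
  proof (induction k)
    case 0 then show ?case by simp
  next
    case (Suc k)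
    have "Y ** ?T (Suc k) = (1/2) *\<^sub>R (Y ** X + (Y ** ?T k) ** ?T k)"
      by (simp add: sq_it.simps(2) mm_scaleR_right matrix_add_ldistrib matrix_mul_assoc)
    also have "\<dots> = (1/2) *\<^sub>R (X ** Y + ?T k ** (?T k ** Y))"
    proof -
      have "(Y ** ?T k) ** ?T k = (?T k ** Y) ** ?T k" by (simp only: Suc)
      also have "\<dots> = ?T k ** (Y ** ?T k)" by (simp only: matrix_mul_assoc)
      also have "\<dots> = ?T k ** (?T k ** Y)" by (simp only: Suc)
      finally show ?thesis using that by simp
    qed
    also have "\<dots> = ?T (Suc k) ** Y"
      by (simp add: sq_it.simps(2) mm_scaleR_left mm_add_rdistrib matrix_mul_assoc)
    finally show ?case .
  qed
  have diff: "norm ((?T (Suc k) - ?T k) *v x) \<le> r^k * norm x" for k x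
  proof (induction k arbitrary: x)
    case 0
    have "norm ((?T (Suc 0) - ?T 0) *v x) = (1/2) * norm (X *v x)" by (simp add: sq_it.simps(2) scaleR_mv)
    also have "\<dots> \<le> norm x"
    proof -
      have "\<rho> * norm x \<le> norm x" using \<rho> by (simp add: mult_left_le_one_le)
      then show ?thesis using nX[of x] norm_ge_zero[of x] by linarith
    qed
    finally show ?case by simp
  next
    case (Suc k)
    let ?A = "?T (Suc k)" and ?B = "?T k"
    have g: "(1/2) *\<^sub>R (X + V ** V) - (1/2) *\<^sub>R (X + W ** W) = (1/2) *\<^sub>R (V ** V - W ** W)"
      for V W :: "real^'n^'n" by (simp add: scaleR_right_distrib scaleR_diff_right)
    have "?T (Suc (Suc k)) - ?A = (1/2) *\<^sub>R (X + ?A ** ?A) - (1/2) *\<^sub>R (X + ?B ** ?B)"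
      by (rule arg_cong2[where f="(-)"]) (rule sq_it.simps(2), rule sq_it.simps(2))
    also have "\<dots> = (1/2) *\<^sub>R (?A ** ?A - ?B ** ?B)" by (rule g)
    also have "?A ** ?A - ?B ** ?B = ?A ** (?A - ?B) + (?A - ?B) ** ?B"
      by (simp add: mm_diff_ldistrib mm_diff_rdistrib)
    finally have eq: "?T (Suc (Suc k)) - ?A = (1/2) *\<^sub>R (?A ** (?A - ?B) + (?A - ?B) ** ?B)" .
    have "(?T (Suc (Suc k)) - ?A) *v x = ((1/2) *\<^sub>R (?A ** (?A - ?B) + (?A - ?B) ** ?B)) *v x"
      by (simp only: eq)
    also have "\<dots> = (1/2) *\<^sub>R (?A *v ((?A - ?B) *v x) + (?A - ?B) *v (?B *v x))"
      by (simp only: scaleR_mv matrix_vector_mult_add_rdistrib matrix_vector_mul_assoc)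
    finally have "norm ((?T (Suc (Suc k)) - ?A) *v x) = norm ((1/2::real) *\<^sub>R (?A *v ((?A - ?B) *v x) + (?A - ?B) *v (?B *v x)))"
      by (rule arg_cong[where f=norm])
    also have "\<dots> \<le> (1/2) * (norm (?A *v ((?A - ?B) *v x)) + norm ((?A - ?B) *v (?B *v x)))"
      by (rule half_tri)
    also have "\<dots> \<le> (1/2) * (r * (r^k * norm x) + r^k * (r * norm x))"
    proof -
      have "norm (?A *v ((?A - ?B) *v x)) \<le> r * (r^k * norm x)"
        using order_trans[OF bnd[of "Suc k" "(?A - ?B) *v x"] mult_left_mono[OF Suc[of x] r0(1)]] .
      moreover have "norm ((?A - ?B) *v (?B *v x)) \<le> r^k * (r * norm x)"
        using order_trans[OF Suc[of "?B *v x"] mult_left_mono[OF bnd[of k x]]] r0 by simp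
      ultimately show ?thesis by (simp add: algebra_simps)
    qed
    also have "\<dots> = r^(Suc k) * norm x" by (simp add: algebra_simps)
    finally show ?case .
  qed
  define f where "f k = ?T (Suc k) - ?T k" for k
  define C where "C = real CARD('n) * real CARD('n)"
  have nf: "norm (f k) \<le> C * r^k" for k
    using mat_norm_bound[of "f k" "r^k"] diff[of k] by (simp add: f_def C_def)
  have sumf: "summable f"
    by (rule summable_comparison_test[where g = "\<lambda>k. C * r^k"])
       (use nf r0 in \<open>auto intro!: summable_mult summable_geometric\<close>)
  define T where "T = suminf f"
  have tel: "(\<Sum>i<k. f i) = ?T k" for k
    unfolding f_def by (subst sum_lessThan_telescope) simp
  have lim: "?T \<longlonglongrightarrow> T"
    using summable_LIMSEQ[OF sumf] unfolding tel T_def .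
  have lim2: "(\<lambda>k. ?T (Suc k)) \<longlonglongrightarrow> (1/2) *\<^sub>R (X + T ** T)"
    unfolding sq_it.simps(2) by (intro tendsto_scaleR tendsto_const tendsto_add tendsto_matmul lim)
  have fixT: "T = (1/2) *\<^sub>R (X + T ** T)"
    using LIMSEQ_unique[OF LIMSEQ_Suc[OF lim] lim2] .
  have symT: "transpose T = T"
  proof -
    have "(\<lambda>k. transpose (?T k)) \<longlonglongrightarrow> transpose T" by (rule tendsto_transpose[OF lim])
    then have "?T \<longlonglongrightarrow> transpose T" unfolding sym .
    then show ?thesis using LIMSEQ_unique[OF _ lim] by blast
  qed
  have bT: "norm (T *v x) \<le> r * norm x" for x
  proof -
    have "(\<lambda>k. norm (?T k *v x)) \<longlonglongrightarrow> norm (T *v x)" by (intro tendsto_norm tendsto_mv lim tendsto_const)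
    then show ?thesis by (rule LIMSEQ_le_const2) (use bnd in blast)
  qed
  have cT: "Y ** T = T ** Y" if "Y ** X = X ** Y" for Y
  proof -
    have l1: "(\<lambda>k. Y ** ?T k) \<longlonglongrightarrow> Y ** T" by (intro tendsto_matmul tendsto_const lim)
    have l2: "(\<lambda>k. ?T k ** Y) \<longlonglongrightarrow> T ** Y" by (intro tendsto_matmul tendsto_const lim)
    have "(\<lambda>k. Y ** ?T k) = (\<lambda>k. ?T k ** Y)" using comm[OF that] by blast
    then show ?thesis using LIMSEQ_unique[OF l1] l2 by metis
  qed
  show ?thesis using symT fixT r0 bT cT by blast
qed

lemma psd_sqrt_unique_aux:
  fixes S S1 :: "real^'n^'n"
  assumes pS: "psd_mat S" and pS1: "psd_mat S1" and sq: "S ** S = S1 ** S1" and cm: "S ** S1 = S1 ** S"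
  shows "S = S1"
proof -
  have sS: "transpose S = S" and sS1: "transpose S1 = S1"
    using pS pS1 by (auto simp: psd_mat_def symmetric_mat_def)
  have qS: "\<forall>x. 0 \<le> x \<bullet> (S *v x)" and qS1: "\<forall>x. 0 \<le> x \<bullet> (S1 *v x)"
    using pS pS1 by (auto simp: psd_mat_def)
  define D where "D = S - S1"
  have sD: "transpose D = D" by (simp add: D_def transpose_diff sS sS1)
  have zero: "(S + S1) ** D = 0"
  proof -
    have "(S + S1) ** D = (S ** S - S ** S1) + (S1 ** S - S1 ** S1)"
      by (simp only: D_def mm_add_rdistrib mm_diff_ldistrib abel4)
    also have "\<dots> = 0" unfolding sq cm by simp
    finally show ?thesis .
  qed
  have "D *v x = 0" for x
  proof -
    define y where "y = D *v x"
    have "y \<bullet> ((S + S1) *v y) = 0"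
      by (simp add: y_def matrix_vector_mul_assoc zero)
    then have "y \<bullet> (S *v y) + y \<bullet> (S1 *v y) = 0"
      by (simp add: matrix_vector_mult_add_rdistrib inner_add_right)
    moreover have "0 \<le> y \<bullet> (S *v y)" "0 \<le> y \<bullet> (S1 *v y)" using qS qS1 by auto
    ultimately have "y \<bullet> (S *v y) = 0" "y \<bullet> (S1 *v y) = 0" by linarith+
    then have "S *v y = 0" "S1 *v y = 0" using psd_zero[OF sS qS] psd_zero[OF sS1 qS1] by auto
    then have Dy: "D *v y = 0" by (simp add: D_def matrix_vector_mult_diff_rdistrib)
    have "y \<bullet> y = x \<bullet> (D *v y)" using sym_inner[OF sD, of y x] by (simp add: y_def)
    then have "y \<bullet> y = 0" using Dy by simp
    then show ?thesis by (simp add: y_def)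
  qed
  then have "D = 0" by (simp add: matrix_eq)
  then show ?thesis by (simp add: D_def)
qed

lemma pd_lower:
  fixes Q :: "real^'n^'n"
  assumes "pd_mat Q"
  shows "\<exists>m>0. \<forall>x. m * (norm x)^2 \<le> x \<bullet> (Q *v x)"
proof -
  have pos: "\<And>x. x \<noteq> 0 \<Longrightarrow> 0 < x \<bullet> (Q *v x)" using assms by (auto simp: pd_mat_def)
  have cont: "continuous_on (sphere 0 1) (\<lambda>x::real^'n. x \<bullet> (Q *v x))"
    by (intro continuous_intros bounded_linear.continuous_on[OF matrix_vector_mul_bounded_linear])
  have "axis (undefined::'n) (1::real) \<in> sphere 0 1" by (simp add: norm_axis_1)
  then have ne: "sphere (0::real^'n) 1 \<noteq> {}" by blast
  obtain x0 where x0: "x0 \<in> sphere 0 1" and mn: "\<And>y. y \<in> sphere 0 1 \<Longrightarrow> x0 \<bullet> (Q *v x0) \<le> y \<bullet> (Q *v y)"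
    using continuous_attains_inf[OF compact_sphere ne cont] by blast
  define m where "m = x0 \<bullet> (Q *v x0)"
  have "x0 \<noteq> 0" using x0 by auto
  then have m0: "0 < m" using pos m_def by auto
  have "m * (norm x)^2 \<le> x \<bullet> (Q *v x)" for x
  proof (cases "x = 0")
    case True then show ?thesis by simp
  next
    case False
    define u where "u = (1 / norm x) *\<^sub>R x"
    have u: "u \<in> sphere 0 1" using False by (simp add: u_def)
    have xu: "x = norm x *\<^sub>R u" using False by (simp add: u_def)
    have "x \<bullet> (Q *v x) = (norm x)^2 * (u \<bullet> (Q *v u))"
      by (subst (1 2) xu) (simp add: matrix_vector_mult_scaleR power2_eq_square)
    moreover have "m \<le> u \<bullet> (Q *v u)" using mn[OF u] by (simp add: m_def)
    ultimately show ?thesis using mult_right_mono[of m "u \<bullet> (Q *v u)" "(norm x)^2"] by (simp add: mult.commute)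
  qed
  then show ?thesis using m0 by blast
qed

lemma psd_sqrt_ex1:
  fixes Q :: "real^'n^'n"
  assumes pdQ: "pd_mat Q"
  shows "\<exists>!S. psd_mat S \<and> S ** S = Q"
proof -
  have sQ: "transpose Q = Q" using pdQ by (simp add: pd_mat_def symmetric_mat_def)
  obtain m where m0: "0 < m" and mq: "\<And>x. m * (norm x)^2 \<le> x \<bullet> (Q *v x)"
    using pd_lower[OF pdQ] by blast
  obtain M where M0: "0 < M" and MQ: "\<And>x. norm (Q *v x) \<le> norm x * M"
    using bounded_linear.pos_bounded[OF matrix_vector_mul_bounded_linear[of Q]] by blast
  define c where "c = M * M / m"
  have c0: "0 < c" using m0 M0 by (simp add: c_def)
  define X where "X = mat 1 - (1/c) *\<^sub>R Q"
  define \<rho> where "\<rho> = sqrt (max 0 (1 - m / c))"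
  have \<rho>: "0 \<le> \<rho>" "\<rho> < 1" using m0 c0 by (auto simp: \<rho>_def max_def)
  have symX: "transpose X = X" by (simp add: X_def transpose_diff transpose_scalar sQ)
  have nX: "norm (X *v x) \<le> \<rho> * norm x" for x
  proof -
    have Xx: "X *v x = x - (1/c) *\<^sub>R (Q *v x)"
      by (simp add: X_def matrix_vector_mult_diff_rdistrib scaleR_mv)
    have e: "(norm (a - b))^2 = (norm a)^2 - 2 * (a \<bullet> b) + (norm b)^2" for a b :: "real^'n"
      by (simp add: power2_norm_eq_inner inner_diff_left inner_diff_right inner_commute)
    have "(norm (X *v x))^2 = (norm x)^2 - 2 * (x \<bullet> ((1/c) *\<^sub>R (Q *v x))) + (norm ((1/c) *\<^sub>R (Q *v x)))^2"
      unfolding Xx e ..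
    also have "\<dots> = (norm x)^2 - 2 / c * (x \<bullet> (Q *v x)) + (norm (Q *v x))^2 / c^2"
      using c0 by (simp add: power_mult_distrib power_divide)
    also have "\<dots> \<le> (norm x)^2 - 2 / c * (m * (norm x)^2) + (norm x * M)^2 / c^2"
    proof -
      have "2 / c * (m * (norm x)^2) \<le> 2 / c * (x \<bullet> (Q *v x))" using mq[of x] c0 by (simp add: divide_right_mono)
      moreover have "(norm (Q *v x))^2 \<le> (norm x * M)^2" using MQ[of x] by (simp add: power_mono)
      then have "(norm (Q *v x))^2 / c^2 \<le> (norm x * M)^2 / c^2" using c0 by (simp add: divide_right_mono)
      ultimately show ?thesis by linarith
    qed
    also have "\<dots> = (1 - m / c) * (norm x)^2"
    proof -
      have "M * M / (c * c) = m / c" using m0 M0 by (simp add: c_def)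
      moreover have "(norm x * M)^2 / c^2 = (M * M / (c * c)) * (norm x)^2" by (simp add: power2_eq_square)
      ultimately have "(norm x * M)^2 / c^2 = (m / c) * (norm x)^2" by simp
      then show ?thesis by (simp add: algebra_simps)
    qed
    also have "\<dots> \<le> \<rho>^2 * (norm x)^2"
    proof -
      have "1 - m / c \<le> \<rho>^2" unfolding \<rho>_def by simp
      then show ?thesis by (rule mult_right_mono) simp
    qed
    also have "\<dots> = (\<rho> * norm x)^2" by (simp add: power_mult_distrib)
    finally have "(norm (X *v x))^2 \<le> (\<rho> * norm x)^2" .
    then show ?thesis by (rule power2_le_imp_le) (use \<rho> in simp)
  qed
  obtain T r where symT: "transpose T = T" and fixT: "T = (1/2) *\<^sub>R (X + T ** T)" and r1: "r < 1"
    and bT: "\<And>x. norm (T *v x) \<le> r * norm x" and cT: "\<And>Y. Y ** X = X ** Y \<Longrightarrow> Y ** T = T ** Y"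
    using sq_fix[OF symX nX \<rho>] by blast
  define S where "S = sqrt c *\<^sub>R (mat 1 - T)"
  have TT: "T ** T = 2 *\<^sub>R T - X"
  proof -
    have "2 *\<^sub>R T = X + T ** T" by (subst fixT) simp
    then have "2 *\<^sub>R T - X = T ** T" by simp
    then show ?thesis by simp
  qed
  have SS: "S ** S = Q"
  proof -
    have g: "M - V - (V - (2 *\<^sub>R V - Z)) = M - Z" for M V Z :: "real^'n^'n"
      by (simp add: scaleR_2 algebra_simps)
    have "(mat 1 - T) ** (mat 1 - T) = mat 1 - T - (T - T ** T)"
      by (simp add: mm_diff_ldistrib mm_diff_rdistrib)
    also have "\<dots> = mat 1 - X" unfolding TT by (rule g)
    finally have "S ** S = c *\<^sub>R (mat 1 - X)"
      using c0 by (simp add: S_def mm_scaleR_left mm_scaleR_right)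
    then show ?thesis using c0 by (simp add: X_def)
  qed
  have pS: "psd_mat S"
  proof -
    have "transpose S = S" by (simp add: S_def transpose_scalar transpose_diff symT)
    moreover have "0 \<le> x \<bullet> (S *v x)" for x
    proof -
      have "x \<bullet> (T *v x) \<le> norm x * norm (T *v x)" by (rule norm_cauchy_schwarz)
      also have "\<dots> \<le> norm x * (r * norm x)" by (simp add: bT mult_left_mono)
      also have "\<dots> \<le> norm x * norm x"
      proof -
        have "r * norm x \<le> 1 * norm x" using r1 by (intro mult_right_mono) auto
        then show ?thesis by (simp add: mult_left_mono)
      qed
      also have "\<dots> = x \<bullet> x" by (simp add: norm_eq_sqrt_inner)
      finally have "0 \<le> x \<bullet> x - x \<bullet> (T *v x)" by simp
      moreover have "x \<bullet> (S *v x) = sqrt c * (x \<bullet> x - x \<bullet> (T *v x))"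
        by (simp add: S_def scaleR_mv matrix_vector_mult_diff_rdistrib inner_diff_right)
      ultimately show ?thesis using c0 by simp
    qed
    ultimately show ?thesis by (simp add: psd_mat_def symmetric_mat_def)
  qed
  have uniq: "S1 = S" if "psd_mat S1" "S1 ** S1 = Q" for S1
  proof -
    have "S1 ** Q = Q ** S1" unfolding that(2)[symmetric] by (simp add: matrix_mul_assoc)
    then have "S1 ** X = X ** S1"
      by (simp add: X_def mm_diff_ldistrib mm_diff_rdistrib mm_scaleR_left mm_scaleR_right)
    then have "S1 ** T = T ** S1" by (rule cT)
    then have "S ** S1 = S1 ** S"
      by (simp add: S_def mm_scaleR_left mm_scaleR_right mm_diff_ldistrib mm_diff_rdistrib)
    then show ?thesis using psd_sqrt_unique_aux[OF pS that(1)] SS that(2) by simp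
  qed
  show ?thesis using pS SS uniq by blast
qed

lemma msqrt_props:
  fixes Q :: "real^'n^'n"
  assumes "pd_mat Q"
  shows "psd_mat (msqrt Q)" "msqrt Q ** msqrt Q = Q"
  using theI'[OF psd_sqrt_ex1[OF assms]] unfolding msqrt_def by auto

lemma msqrt_inj:
  fixes Q :: "real^'n^'n"
  assumes "pd_mat Q" "msqrt Q *v x = 0"
  shows "x = 0"
proof -
  have "Q *v x = 0" using msqrt_props(2)[OF assms(1)] assms(2)
    by (metis matrix_vector_mul_assoc matrix_vector_mult_0_right)
  then show ?thesis using assms(1) unfolding pd_mat_def by force
qed



lemma cmat_nth[simp]: "cmat M $ i $ j = complex_of_real (M $ i $ j)"
  by (simp add: cmat_def)
lemma cmat_mult: "cmat (A ** B) = cmat A ** cmat B"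
  by (simp add: vec_eq_iff matrix_matrix_mult_def)
lemma cmat_add: "cmat (A + B) = cmat A + cmat B"
  by (simp add: vec_eq_iff)
lemma cmat_diff: "cmat (A - B) = cmat A - cmat B"
  by (simp add: vec_eq_iff)
lemma cmat_mat1: "cmat (mat 1) = mat 1"
  by (simp add: vec_eq_iff mat_def)
lemma matsub_nth: "(mat s - cmat X) $ i $ j = of_bool (i = j) * s - complex_of_real (X $ i $ j)"
  by (simp add: mat_def)
lemma mat_mv: "mat (s::'a::semiring_1) *v v = s *s v"
  by (simp add: vec_eq_iff matrix_vector_mult_def mat_def if_distrib if_distribR sum.delta cong: if_cong)
lemma mv_scaleR: "(A::'a::real_algebra_1^'n^'m) *v (k *\<^sub>R v) = k *\<^sub>R (A *v v)"
  by (simp add: vec_eq_iff matrix_vector_mult_def scaleR_sum_right)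
lemma vec_nth_le: "norm (x $ i) \<le> norm (x::'a::real_normed_vector^'n)"
  unfolding norm_vec_def by (rule member_le_L2_set) auto
lemma norm_smult: "norm ((c::complex) *s v) = norm c * norm (v::complex^'n)"
proof -
  have "norm (c *s v) = L2_set (\<lambda>i. norm c * norm (v $ i)) UNIV"
    by (simp add: norm_vec_def norm_mult)
  also have "\<dots> = norm c * norm v"
    by (simp add: norm_vec_def L2_set_right_distrib)
  finally show ?thesis .
qed

lemma cont_nth[continuous_intros]:
  fixes f :: "'a::topological_space \<Rightarrow> 'b::real_normed_vector^'n"
  shows "continuous_on S f \<Longrightarrow> continuous_on S (\<lambda>x. f x $ i)"
  using bounded_linear.continuous_on[OF bounded_linear_vec_nth[of i], of S f] by simp

lemma tendsto_cmat[tendsto_intros]: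
  assumes "(f \<longlongrightarrow> M) F"
  shows "((\<lambda>x. cmat (f x)) \<longlongrightarrow> cmat M) F"
  unfolding cmat_def by (intro tendsto_vec_lambda tendsto_of_real tendsto_vec_nth assms)

lemma tendsto_out_mat:
  assumes "(f \<longlongrightarrow> K) F"
  shows "((\<lambda>x. out_mat Qi Ri (f x)) \<longlongrightarrow> out_mat Qi Ri K) F"
  unfolding out_mat_def
proof (intro tendsto_vec_lambda)
  fix r
  show "((\<lambda>x. case r of Inl i \<Rightarrow> msqrt Qi $ i | Inr j \<Rightarrow> (msqrt Ri ** f x) $ j) \<longlongrightarrow>
          (case r of Inl i \<Rightarrow> msqrt Qi $ i | Inr j \<Rightarrow> (msqrt Ri ** K) $ j)) F"
    by (cases r) (auto intro!: tendsto_intros assms)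
qed

lemma inj_invertible:
  fixes M :: "complex^'n^'n"
  assumes "\<And>v. M *v v = 0 \<Longrightarrow> v = 0"
  shows "invertible M" "M ** matrix_inv M = mat 1" "matrix_inv M ** M = mat 1" "det M \<noteq> 0"
proof -
  have "\<exists>B. B ** M = mat 1" using matrix_left_invertible_ker assms by blast
  then show inv: "invertible M" using invertible_left_inverse by blast
  then have "\<exists>A'. M ** A' = mat 1 \<and> A' ** M = mat 1" by (simp add: invertible_def)
  then have "M ** matrix_inv M = mat 1 \<and> matrix_inv M ** M = mat 1"
    unfolding matrix_inv_def by (rule someI_ex)
  then show "M ** matrix_inv M = mat 1" "matrix_inv M ** M = mat 1" by auto
  show "det M \<noteq> 0" using inv invertible_det_nz by blast
qed

lemma not_inj_det:
  fixes M :: "complex^'n^'n"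
  assumes "M *v v = 0" "v \<noteq> 0"
  shows "det M = 0"
proof -
  have "\<not> inj ((*v) M)" using assms by (metis injD matrix_vector_mult_0_right)
  then show ?thesis using inj_matrix_vector_mult invertible_det_nz by blast
qed

lemma hurwitz_inj:
  assumes "hurwitz A0" "0 \<le> Re s" "(mat s - cmat A0) *v v = 0"
  shows "v = 0"
proof (rule ccontr)
  assume v: "v \<noteq> 0"
  have "cmat A0 *v v = s *s v" using assms(3)
    by (simp add: matrix_vector_mult_diff_rdistrib mat_mv)
  then have "Re s < 0" using assms(1) v unfolding hurwitz_def by blast
  then show False using assms(2) by simp
qed

lemma l1_bound:
  fixes N :: "complex^'n^'m"
  shows "norm (N *v x) \<le> (\<Sum>i\<in>UNIV. \<Sum>j\<in>UNIV. norm (N$i$j)) * norm x"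
proof -
  have "norm (N *v x) \<le> (\<Sum>i\<in>UNIV. norm ((N *v x)$i))" unfolding norm_vec_def by (rule L2_set_le_sum) simp
  also have "\<dots> \<le> (\<Sum>i\<in>UNIV. (\<Sum>j\<in>UNIV. norm (N$i$j)) * norm x)"
  proof (intro sum_mono)
    fix i
    have "norm ((N *v x)$i) \<le> (\<Sum>j\<in>UNIV. norm (N$i$j * x$j))"
      unfolding matrix_vector_mult_def by (simp add: norm_sum)
    also have "\<dots> \<le> (\<Sum>j\<in>UNIV. norm (N$i$j) * norm x)"
      by (intro sum_mono) (simp add: norm_mult mult_left_mono vec_nth_le)
    finally show "norm ((N *v x)$i) \<le> (\<Sum>j\<in>UNIV. norm (N$i$j)) * norm x" by (simp add: sum_distrib_right)
  qed
  finally show ?thesis by (simp add: sum_distrib_right)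
qed

lemma hurwitz_lower:
  fixes A0 :: "real^'n^'n"
  assumes hur: "hurwitz A0"
  shows "\<exists>\<delta>>0. \<forall>\<omega> v. \<delta> * norm v \<le> norm ((mat (\<i> * complex_of_real \<omega>) - cmat A0) *v v)"
proof -
  obtain L where L0: "0 < L" and L: "\<And>v. norm (cmat A0 *v v) \<le> norm v * L"
    using bounded_linear.pos_bounded[OF matrix_vector_mul_bounded_linear[of "cmat A0"]] by blast
  define R where "R = L + 1"
  define F where "F p = norm ((mat (\<i> * complex_of_real (fst p)) - cmat A0) *v snd p)" for p :: "real \<times> (complex^'n)"
  have Fe: "F p = norm ((\<chi> i. \<i> * complex_of_real (fst p) * snd p $ i) - (\<chi> i. \<Sum>j\<in>UNIV. cmat A0 $ i $ j * snd p $ j))" for p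
    by (simp only: F_def matrix_vector_mult_diff_rdistrib mat_mv) (simp only: vector_scalar_mult_def matrix_vector_mult_def)
  define D where "D = {-R..R} \<times> sphere (0::complex^'n) 1"
  have cD: "compact D" unfolding D_def by (intro compact_Times compact_Icc compact_sphere)
  have "(0::real, axis (undefined::'n) (1::complex)) \<in> D" using L0 by (simp add: D_def R_def norm_axis_1)
  then have neD: "D \<noteq> {}" by blast
  have contF: "continuous_on D F"
    unfolding Fe[abs_def] by (intro continuous_intros continuous_on_vec_lambda)
  obtain p0 where p0: "p0 \<in> D" and mn: "\<And>p. p \<in> D \<Longrightarrow> F p0 \<le> F p"
    using continuous_attains_inf[OF cD neD contF] by blast
  have "F p0 \<noteq> 0"
  proof
    assume "F p0 = 0"
    then have "(mat (\<i> * complex_of_real (fst p0)) - cmat A0) *v snd p0 = 0" by (simp add: F_def)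
    then have "snd p0 = 0" using hurwitz_inj[OF hur, of "\<i> * complex_of_real (fst p0)"] by simp
    then show False using p0 by (auto simp: D_def)
  qed
  then have F0: "0 < F p0" by (simp add: F_def)
  define \<delta> where "\<delta> = min (F p0) 1"
  have "\<delta> * norm v \<le> norm ((mat (\<i> * complex_of_real \<omega>) - cmat A0) *v v)" for \<omega> v
  proof (cases "v = 0")
    case True then show ?thesis by simp
  next
    case False
    define u where "u = (1 / norm v) *\<^sub>R v"
    have nu: "norm u = 1" using False by (simp add: u_def)
    have vu: "v = norm v *\<^sub>R u" using False by (simp add: u_def)
    have eq: "norm ((mat (\<i> * complex_of_real \<omega>) - cmat A0) *v v) = norm v * F (\<omega>, u)"
      by (subst vu) (simp add: F_def mv_scaleR)
    have "\<delta> \<le> F (\<omega>, u)"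
    proof (cases "\<bar>\<omega>\<bar> \<le> R")
      case True
      then have "(\<omega>, u) \<in> D" using nu by (simp add: D_def abs_le_iff)
      then show ?thesis using mn[of "(\<omega>, u)"] by (simp add: \<delta>_def)
    next
      case False
      have "F (\<omega>, u) = norm ((\<i> * complex_of_real \<omega>) *s u - cmat A0 *v u)"
        by (simp add: F_def matrix_vector_mult_diff_rdistrib mat_mv)
      also have "\<dots> \<ge> norm ((\<i> * complex_of_real \<omega>) *s u) - norm (cmat A0 *v u)"
        by (rule norm_triangle_ineq2)
      finally have "F (\<omega>, u) \<ge> \<bar>\<omega>\<bar> - L" using L[of u] nu by (simp add: norm_smult norm_mult)
      then show ?thesis using False by (simp add: \<delta>_def R_def)
    qed
    then show ?thesis unfolding eq using False by (simp add: mult_left_mono mult.commute)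
  qed
  moreover have "0 < \<delta>" using F0 by (simp add: \<delta>_def)
  ultimately show ?thesis by blast
qed



lemma T_apply: "T_inf A B Bw Qi Ri K s *v v =
    cmat (out_mat Qi Ri K) *v (matrix_inv (mat s - cmat (A + B ** K)) *v (cmat Bw *v v))"
  by (simp add: T_inf_def matrix_vector_mul_assoc matrix_mul_assoc)

lemma inv_solve:
  assumes "hurwitz A0" "0 \<le> Re s"
  shows "(mat s - cmat A0) *v (matrix_inv (mat s - cmat A0) *v y) = y"
    "matrix_inv (mat s - cmat A0) *v ((mat s - cmat A0) *v z) = z"
proof -
  have inj: "\<And>v. (mat s - cmat A0) *v v = 0 \<Longrightarrow> v = 0" using hurwitz_inj[OF assms] by blast
  show "(mat s - cmat A0) *v (matrix_inv (mat s - cmat A0) *v y) = y"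
    by (simp add: matrix_vector_mul_assoc inj_invertible(2)[OF inj])
  show "matrix_inv (mat s - cmat A0) *v ((mat s - cmat A0) *v z) = z"
    by (simp add: matrix_vector_mul_assoc inj_invertible(3)[OF inj])
qed

lemma T_bdd:
  assumes hur: "hurwitz (A + B ** K)"
  shows "bdd_above (range (\<lambda>\<omega>. onorm (\<lambda>v. T_inf A B Bw Qi Ri K (\<i> * complex_of_real \<omega>) *v v)))"
proof -
  obtain \<delta> where d0: "0 < \<delta>" and dl: "\<And>\<omega> v. \<delta> * norm v \<le> norm ((mat (\<i> * complex_of_real \<omega>) - cmat (A + B ** K)) *v v)"
    using hurwitz_lower[OF hur] by blast
  obtain LC where LC0: "0 < LC" and LC: "\<And>v. norm (cmat (out_mat Qi Ri K) *v v) \<le> norm v * LC"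
    using bounded_linear.pos_bounded[OF matrix_vector_mul_bounded_linear[of "cmat (out_mat Qi Ri K)"]] by blast
  obtain LB where LB0: "0 < LB" and LB: "\<And>v. norm (cmat Bw *v v) \<le> norm v * LB"
    using bounded_linear.pos_bounded[OF matrix_vector_mul_bounded_linear[of "cmat Bw"]] by blast
  have "onorm (\<lambda>v. T_inf A B Bw Qi Ri K (\<i> * complex_of_real \<omega>) *v v) \<le> LC * LB / \<delta>" for \<omega>
  proof (rule onorm_bound)
    show "0 \<le> LC * LB / \<delta>" using LC0 LB0 d0 by simp
  next
    fix v
    let ?M = "mat (\<i> * complex_of_real \<omega>) - cmat (A + B ** K)"
    define y where "y = cmat Bw *v v"
    define z where "z = matrix_inv ?M *v y"
    have Mz: "?M *v z = y" unfolding z_def by (rule inv_solve(1)[OF hur]) simp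
    have "\<delta> * norm z \<le> norm y" using dl[where \<omega>=\<omega> and v=z] Mz by simp
    then have nz: "norm z \<le> norm y / \<delta>" using d0 by (simp add: field_simps)
    have "norm (T_inf A B Bw Qi Ri K (\<i> * complex_of_real \<omega>) *v v) = norm (cmat (out_mat Qi Ri K) *v z)"
      by (simp add: T_apply z_def y_def)
    also have "\<dots> \<le> norm z * LC" by (rule LC)
    also have "\<dots> \<le> (norm y / \<delta>) * LC" using nz LC0 by (intro mult_right_mono) auto
    also have "\<dots> \<le> (norm v * LB / \<delta>) * LC" using LB[of v] d0 LC0
      by (simp add: y_def divide_right_mono mult_right_mono)
    also have "\<dots> = LC * LB / \<delta> * norm v" by simp
    finally show "norm (T_inf A B Bw Qi Ri K (\<i> * complex_of_real \<omega>) *v v) \<le> LC * LB / \<delta> * norm v" .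
  qed
  then show ?thesis by (intro bdd_aboveI) auto
qed

lemma T_le_hinf:
  assumes "hurwitz (A + B ** K)"
  shows "onorm (\<lambda>v. T_inf A B Bw Qi Ri K (\<i> * complex_of_real \<omega>) *v v) \<le> hinf_norm A B Bw Qi Ri K"
  unfolding hinf_norm_def by (rule cSUP_upper[OF UNIV_I T_bdd[OF assms]])



lemma cmat_inj:
  fixes S :: "real^'n^'m"
  assumes inj: "\<And>x. S *v x = 0 \<Longrightarrow> x = 0" and eq: "cmat S *v v = 0"
  shows "v = 0"
proof -
  define vr where "vr = (\<chi> i. Re (v $ i))"
  define vi where "vi = (\<chi> i. Im (v $ i))"
  have "(S *v vr) $ k = Re ((cmat S *v v) $ k)" for k by (simp add: vr_def matrix_vector_mult_def Re_sum)
  then have "S *v vr = 0" using eq by (simp add: vec_eq_iff)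
  then have r: "vr = 0" by (rule inj)
  have "(S *v vi) $ k = Im ((cmat S *v v) $ k)" for k by (simp add: vi_def matrix_vector_mult_def Im_sum)
  then have "S *v vi = 0" using eq by (simp add: vec_eq_iff)
  then have i: "vi = 0" by (rule inj)
  show ?thesis using r i by (simp add: vec_eq_iff vr_def vi_def complex_eq_iff)
qed

lemma limit_onorm_le:
  fixes Ks :: "nat \<Rightarrow> real^'n^'m"
  assumes lim: "Ks \<longlonglongrightarrow> K" and hur: "\<And>j. hurwitz (A + B ** Ks j)" and hurK: "hurwitz (A + B ** K)"
    and bd: "\<And>j. onorm (\<lambda>v. T_inf A B Bw Qi Ri (Ks j) (\<i> * complex_of_real \<omega>) *v v) \<le> \<beta>"
    and b0: "0 \<le> \<beta>"
  shows "onorm (\<lambda>v. T_inf A B Bw Qi Ri K (\<i> * complex_of_real \<omega>) *v v) \<le> \<beta>"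
proof (rule onorm_bound[OF b0])
  fix v :: "complex^'n"
  define s where "s = \<i> * complex_of_real \<omega>"
  have s0: "0 \<le> Re s" by (simp add: s_def)
  define M0 where "M0 = mat s - cmat (A + B ** K)"
  define Ms where "Ms j = mat s - cmat (A + B ** Ks j)" for j
  define y where "y = cmat Bw *v v"
  define z where "z = matrix_inv M0 *v y"
  define zs where "zs j = matrix_inv (Ms j) *v y" for j
  have Mz: "M0 *v z = y" unfolding z_def M0_def by (rule inv_solve(1)[OF hurK s0])
  have Mzs: "Ms j *v zs j = y" for j unfolding zs_def Ms_def by (rule inv_solve(1)[OF hur s0])
  obtain \<delta> where d0: "0 < \<delta>" and dl: "\<And>\<omega> v. \<delta> * norm v \<le> norm ((mat (\<i> * complex_of_real \<omega>) - cmat (A + B ** K)) *v v)"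
    using hurwitz_lower[OF hurK] by blast
  have dl0: "\<delta> * norm x \<le> norm (M0 *v x)" for x using dl[where \<omega>=\<omega> and v=x] by (simp add: M0_def s_def)
  define E where "E j = cmat (A + B ** Ks j) - cmat (A + B ** K)" for j
  have ME: "Ms j = M0 - E j" for j by (simp add: Ms_def M0_def E_def)
  define e where "e j = (\<Sum>i\<in>UNIV. \<Sum>k\<in>UNIV. norm (E j $ i $ k))" for j
  have Elim: "E \<longlonglongrightarrow> 0"
  proof -
    have "(\<lambda>j. cmat (A + B ** Ks j)) \<longlonglongrightarrow> cmat (A + B ** K)" by (intro tendsto_intros lim)
    then show ?thesis unfolding E_def[abs_def] by (rule LIM_zero)
  qed
  have elim: "e \<longlonglongrightarrow> 0"
  proof -
    have "e \<longlonglongrightarrow> (\<Sum>i\<in>UNIV. \<Sum>k\<in>UNIV. norm ((0::complex^'n^'n) $ i $ k))"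
      unfolding e_def[abs_def] by (intro tendsto_intros Elim)
    then show ?thesis by simp
  qed
  have Eb: "norm (E j *v x) \<le> e j * norm x" for j x unfolding e_def by (rule l1_bound)
  have ev: "eventually (\<lambda>j. e j < \<delta>/2) sequentially" using order_tendstoD(2)[OF elim, of "\<delta>/2"] d0 by linarith
  have "eventually (\<lambda>j. norm (zs j - z) \<le> (2/\<delta>) * (e j * norm z)) sequentially"
    using ev
  proof (rule eventually_mono)
    fix j assume ej: "e j < \<delta>/2"
    have eqd: "Ms j *v (zs j - z) = E j *v z"
    proof -
      have "Ms j *v (zs j - z) = y - (M0 *v z - E j *v z)"
        using Mzs[of j] by (simp add: ME matrix_vector_mult_diff_distrib matrix_vector_mult_diff_rdistrib)
      then show ?thesis using Mz by simp
    qed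
    have lb: "(\<delta>/2) * norm x \<le> norm (Ms j *v x)" for x
    proof -
      have "norm (M0 *v x) - norm (E j *v x) \<le> norm (Ms j *v x)"
        using norm_triangle_ineq2[of "M0 *v x" "E j *v x"] by (simp add: ME matrix_vector_mult_diff_rdistrib)
      moreover have "e j * norm x \<le> (\<delta>/2) * norm x" using ej by (intro mult_right_mono) auto
      ultimately show ?thesis using dl0[of x] Eb[of j x] by linarith
    qed
    have "(\<delta>/2) * norm (zs j - z) \<le> e j * norm z" using lb[of "zs j - z"] Eb[of j z] eqd by simp
    then show "norm (zs j - z) \<le> (2/\<delta>) * (e j * norm z)" using d0 by (simp add: field_simps)
  qed
  moreover have "(\<lambda>j. (2/\<delta>) * (e j * norm z)) \<longlonglongrightarrow> 0"
    using tendsto_mult_left_zero[OF tendsto_mult_right_zero[OF elim], of "2/\<delta>" "norm z"] by (simp add: mult.assoc)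
  ultimately have "(\<lambda>j. zs j - z) \<longlonglongrightarrow> 0" by (rule Lim_null_comparison)
  then have zlim: "zs \<longlonglongrightarrow> z" by (rule LIM_zero_cancel)
  have eqT: "T_inf A B Bw Qi Ri (Ks j) s *v v = cmat (out_mat Qi Ri (Ks j)) *v zs j" for j
    by (simp add: T_apply zs_def Ms_def y_def)
  have eqT0: "T_inf A B Bw Qi Ri K s *v v = cmat (out_mat Qi Ri K) *v z"
    by (simp add: T_apply z_def M0_def y_def)
  have "(\<lambda>j. cmat (out_mat Qi Ri (Ks j)) *v zs j) \<longlonglongrightarrow> cmat (out_mat Qi Ri K) *v z"
    by (intro tendsto_mv tendsto_cmat tendsto_out_mat lim zlim)
  then have Tlim: "(\<lambda>j. norm (T_inf A B Bw Qi Ri (Ks j) s *v v)) \<longlonglongrightarrow> norm (T_inf A B Bw Qi Ri K s *v v)"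
    unfolding eqT eqT0 by (rule tendsto_norm)
  have "norm (T_inf A B Bw Qi Ri (Ks j) s *v v) \<le> \<beta> * norm v" for j
  proof -
    have "norm (T_inf A B Bw Qi Ri (Ks j) s *v v) \<le> onorm (\<lambda>v. T_inf A B Bw Qi Ri (Ks j) s *v v) * norm v"
      by (rule onorm[OF matrix_vector_mul_bounded_linear])
    also have "\<dots> \<le> \<beta> * norm v" using bd[of j] by (simp add: s_def mult_right_mono)
    finally show ?thesis .
  qed
  then have "norm (T_inf A B Bw Qi Ri K s *v v) \<le> \<beta> * norm v"
    using LIMSEQ_le_const2[OF Tlim] by blast
  then show "norm (T_inf A B Bw Qi Ri K (\<i> * complex_of_real \<omega>) *v v) \<le> \<beta> * norm v" by (simp add: s_def)
qed



lemma limit_no_imag_eig: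
  fixes Ks :: "nat \<Rightarrow> real^'n^'m"
  assumes lim: "Ks \<longlonglongrightarrow> K" and hur: "\<And>j. hurwitz (A + B ** Ks j)"
    and bd: "\<And>j. onorm (\<lambda>v. T_inf A B Bw Qi Ri (Ks j) (\<i> * complex_of_real \<omega>) *v v) \<le> \<beta>"
    and pdQ: "pd_mat Qi" and pdW: "pd_mat (Bw ** transpose Bw)"
    and v0: "v \<noteq> 0" and ev: "cmat (A + B ** K) *v v = (\<i> * complex_of_real \<omega>) *s v"
  shows False
proof -
  define s where "s = \<i> * complex_of_real \<omega>"
  have s0: "0 \<le> Re s" by (simp add: s_def)
  define Ms where "Ms j = mat s - cmat (A + B ** Ks j)" for j
  define w where "w j = Ms j *v v" for j
  have wlim: "w \<longlonglongrightarrow> 0"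
  proof -
    have "w \<longlonglongrightarrow> (mat s - cmat (A + B ** K)) *v v" unfolding w_def[abs_def] Ms_def by (intro tendsto_intros lim)
    moreover have "(mat s - cmat (A + B ** K)) *v v = 0" using ev by (simp add: matrix_vector_mult_diff_rdistrib mat_mv s_def)
    ultimately show ?thesis by simp
  qed
  obtain G where BG: "Bw ** G = mat 1"
  proof -
    let ?W = "Bw ** transpose Bw"
    have "x = 0" if "?W *v x = 0" for x
      using pdW that unfolding pd_mat_def by (metis inner_zero_right less_irrefl)
    then have "\<exists>B'. B' ** ?W = mat 1" using matrix_left_invertible_ker by blast
    then have "invertible ?W" using invertible_left_inverse by blast
    then obtain H where "?W ** H = mat 1" using invertible_right_inverse by blast
    then have "Bw ** (transpose Bw ** H) = mat 1" by (simp add: matrix_mul_assoc)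
    then show ?thesis using that by blast
  qed
  define u where "u j = cmat G *v w j" for j
  have ulim: "u \<longlonglongrightarrow> 0"
    using tendsto_mv[OF tendsto_const wlim, of "cmat G"] by (simp add: u_def[abs_def])
  have Bu: "cmat Bw *v u j = w j" for j
    by (simp add: u_def matrix_vector_mul_assoc cmat_mult[symmetric] BG cmat_mat1)
  have Tu: "T_inf A B Bw Qi Ri (Ks j) s *v u j = cmat (out_mat Qi Ri (Ks j)) *v v" for j
    by (simp add: T_apply Bu w_def Ms_def inv_solve(2)[OF hur s0])
  have "cmat (msqrt Qi) *v v \<noteq> 0"
    using cmat_inj[OF msqrt_inj[OF pdQ]] v0 by blast
  then obtain i0 where i0: "(cmat (msqrt Qi) *v v) $ i0 \<noteq> 0" by (metis vec_eq_iff zero_index)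
  define \<kappa> where "\<kappa> = norm ((cmat (msqrt Qi) *v v) $ i0)"
  have k0: "0 < \<kappa>" using i0 by (simp add: \<kappa>_def)
  have comp: "(cmat (out_mat Qi Ri K') *v v) $ Inl i0 = (cmat (msqrt Qi) *v v) $ i0" for K'
    by (simp add: matrix_vector_mult_def out_mat_def)
  have le: "\<kappa> \<le> \<beta> * norm (u j)" for j
  proof -
    have "\<kappa> \<le> norm (T_inf A B Bw Qi Ri (Ks j) s *v u j)"
      using vec_nth_le[of "cmat (out_mat Qi Ri (Ks j)) *v v" "Inl i0"] by (simp add: Tu comp \<kappa>_def)
    also have "\<dots> \<le> onorm (\<lambda>v. T_inf A B Bw Qi Ri (Ks j) s *v v) * norm (u j)"
      by (rule onorm[OF matrix_vector_mul_bounded_linear])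
    also have "\<dots> \<le> \<beta> * norm (u j)" using bd[of j] by (simp add: s_def mult_right_mono)
    finally show ?thesis .
  qed
  have "(\<lambda>j. \<beta> * norm (u j)) \<longlonglongrightarrow> 0"
    using tendsto_mult_left_zero[OF tendsto_norm_zero[OF ulim], of \<beta>] by (simp add: mult.commute)
  then have "eventually (\<lambda>j. \<beta> * norm (u j) < \<kappa>) sequentially" using order_tendstoD(2) k0 by blast
  then obtain N where "\<forall>n\<ge>N. \<beta> * norm (u n) < \<kappa>" unfolding eventually_sequentially by blast
  then have "\<beta> * norm (u N) < \<kappa>" by blast
  then show False using le[of N] by simp
qed

lemma det_hol: "(\<lambda>s. det (mat s - cmat X)) holomorphic_on U"
  unfolding det_def matsub_nth by (intro holomorphic_intros)

lemma det_cont: "continuous_on UNIV (\<lambda>p::complex \<times> (real^'n^'n). det (mat (fst p) - cmat (snd p)))"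
  unfolding det_def matsub_nth by (intro continuous_intros)

lemma det_uniform:
  fixes Xs :: "nat \<Rightarrow> real^'n^'n"
  assumes lim: "Xs \<longlonglongrightarrow> X0" and cK: "compact Kc"
  shows "uniform_limit Kc (\<lambda>j s. det (mat s - cmat (Xs j))) (\<lambda>s. det (mat s - cmat X0)) sequentially"
proof -
  define h where "h p = det (mat (fst p) - cmat (snd p))" for p :: "complex \<times> (real^'n^'n)"
  define D where "D = Kc \<times> cball X0 1"
  have uc: "uniformly_continuous_on D h"
    unfolding h_def[abs_def] D_def
    by (rule compact_uniformly_continuous[OF continuous_on_subset[OF det_cont subset_UNIV]])
       (intro compact_Times cK compact_cball)
  show ?thesis unfolding uniform_limit_iff
  proof (intro allI impI)
    fix e :: real assume e: "0 < e"
    obtain d where d0: "0 < d" and dd: "\<forall>x\<in>D. \<forall>x'\<in>D. dist x' x < d \<longrightarrow> dist (h x') (h x) < e"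
      using uc e unfolding uniformly_continuous_on_def by blast
    have "eventually (\<lambda>j. dist (Xs j) X0 < min d 1) sequentially" using tendstoD[OF lim, of "min d 1"] d0 by simp
    then show "eventually (\<lambda>j. \<forall>s\<in>Kc. dist (det (mat s - cmat (Xs j))) (det (mat s - cmat X0)) < e) sequentially"
    proof (rule eventually_mono)
      fix j assume dj: "dist (Xs j) X0 < min d 1"
      show "\<forall>s\<in>Kc. dist (det (mat s - cmat (Xs j))) (det (mat s - cmat X0)) < e"
      proof
        fix s assume s: "s \<in> Kc"
        have "(s, Xs j) \<in> D" "(s, X0) \<in> D" using s dj by (auto simp: D_def dist_commute)
        moreover have "dist (s, Xs j) (s, X0) < d" using dj by (simp add: dist_Pair_Pair)
        ultimately have "dist (h (s, Xs j)) (h (s, X0)) < e" using dd by blast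
        then show "dist (det (mat s - cmat (Xs j))) (det (mat s - cmat X0)) < e" by (simp add: h_def)
      qed
    qed
  qed
qed

lemma limit_no_rhp_eig:
  fixes As :: "nat \<Rightarrow> real^'n^'n"
  assumes lim: "As \<longlonglongrightarrow> A0" and hur: "\<And>j. hurwitz (As j)"
    and v0: "v \<noteq> 0" and ev: "cmat A0 *v v = c *s v" and Rc: "0 < Re c"
  shows False
proof -
  define S where "S = {s. 0 < Re s}"
  define g where "g s = det (mat s - cmat A0)" for s
  have gc: "g c = 0" unfolding g_def
    by (rule not_inj_det[OF _ v0]) (simp add: matrix_vector_mult_diff_rdistrib mat_mv ev)
  obtain L where L0: "0 < L" and L: "\<And>v. norm (cmat A0 *v v) \<le> norm v * L"
    using bounded_linear.pos_bounded[OF matrix_vector_mul_bounded_linear[of "cmat A0"]] by blast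
  define R where "R = complex_of_real (L + 1)"
  have gR: "g R \<noteq> 0"
  proof -
    have "u = 0" if "(mat R - cmat A0) *v u = 0" for u
    proof -
      have eq: "R *s u = cmat A0 *v u" using that by (simp add: matrix_vector_mult_diff_rdistrib mat_mv)
      have e1: "norm (R *s u) = (L+1) * norm u" unfolding norm_smult R_def using L0 by simp
      have "(L+1) * norm u = norm (cmat A0 *v u)" by (metis e1 eq)
      then have "(L+1) * norm u \<le> norm u * L" using L[of u] by simp
      then have "norm u \<le> 0" by (simp add: algebra_simps)
      then show ?thesis by simp
    qed
    then show ?thesis unfolding g_def by (rule inj_invertible(4))
  qed
  have "g c \<noteq> 0"
  proof (rule Hurwitz_no_zeros[of S "\<lambda>j s. det (mat s - cmat (As j))" g])
    show "open S" unfolding S_def by (rule open_halfspace_Re_gt)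
    show "connected S" unfolding S_def by (rule convex_connected[OF convex_halfspace_Re_gt])
    show "(\<lambda>s. det (mat s - cmat (As j))) holomorphic_on S" for j by (rule det_hol)
    show "g holomorphic_on S" unfolding g_def[abs_def] by (rule det_hol)
    show "uniform_limit K (\<lambda>j s. det (mat s - cmat (As j))) g sequentially" if "compact K" "K \<subseteq> S" for K
      unfolding g_def[abs_def] by (rule det_uniform[OF lim that(1)])
    show "\<not> g constant_on S"
    proof
      assume "g constant_on S"
      then obtain y where y: "\<forall>x\<in>S. g x = y" by (auto simp: constant_on_def)
      have "c \<in> S" "R \<in> S" using Rc L0 by (auto simp: S_def R_def)
      then show False using y gc gR by metis
    qed
    show "det (mat s - cmat (As j)) \<noteq> 0" if "s \<in> S" for j s
    proof (rule inj_invertible(4))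
      fix u assume "(mat s - cmat (As j)) *v u = 0"
      then show "u = 0" using hurwitz_inj[OF hur[of j], of s u] that by (simp add: S_def)
    qed
    show "c \<in> S" using Rc by (simp add: S_def)
  qed
  then show False using gc by simp
qed



theorem corollary1:
  fixes A :: "real^'n^'n" and B :: "real^'m^'n" and Bw :: "real^'n^'n"
    and Q2 Qi :: "real^'n^'n" and R2 Ri :: "real^'m^'m" and \<beta> :: real
  assumes "psd_mat Q2" and "pd_mat R2" and "pd_mat Qi" and "pd_mat Ri" and "\<beta> > 0"
    and "stabilizable A B"
    and "detectable (msqrt Q2) A"
    and "\<beta> > (INF K\<in>stab_set A B. hinf_norm A B Bw Qi Ri K)"
    and "pd_mat (Bw ** transpose Bw)"
  shows "closure (K_beta A B Bw Qi Ri \<beta>) - K_beta A B Bw Qi Ri \<beta>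
           \<subseteq> {K \<in> stab_set A B. hinf_norm A B Bw Qi Ri K = \<beta>}"
proof
  fix K assume K: "K \<in> closure (K_beta A B Bw Qi Ri \<beta>) - K_beta A B Bw Qi Ri \<beta>"
  have pdQ: "pd_mat Qi" and pdW: "pd_mat (Bw ** transpose Bw)" and b0: "0 < \<beta>" using assms by auto
  from K have Kcl: "K \<in> closure (K_beta A B Bw Qi Ri \<beta>)" and Kn: "K \<notin> K_beta A B Bw Qi Ri \<beta>" by auto
  obtain Ks where Ksin: "\<And>j. Ks j \<in> K_beta A B Bw Qi Ri \<beta>" and lim: "Ks \<longlonglongrightarrow> K"
    using Kcl unfolding closure_sequential by blast
  have hur: "hurwitz (A + B ** Ks j)" for j using Ksin[of j] by (simp add: K_beta_def stab_set_def)
  have hb: "hinf_norm A B Bw Qi Ri (Ks j) < \<beta>" for j using Ksin[of j] by (simp add: K_beta_def)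
  have bd: "onorm (\<lambda>v. T_inf A B Bw Qi Ri (Ks j) (\<i> * complex_of_real \<omega>) *v v) \<le> \<beta>" for j \<omega>
    by (rule order_trans[OF T_le_hinf[OF hur] less_imp_le[OF hb]])
  have hurK: "hurwitz (A + B ** K)"
    unfolding hurwitz_def
  proof (intro allI impI)
    fix c :: complex and v :: "complex^'n"
    assume cv: "v \<noteq> 0 \<and> cmat (A + B ** K) *v v = c *s v"
    show "Re c < 0"
    proof (rule ccontr)
      assume "\<not> Re c < 0"
      then consider "Re c = 0" | "0 < Re c" by linarith
      then show False
      proof cases
        case 1
        then have c: "c = \<i> * complex_of_real (Im c)" by (simp add: complex_eq_iff)
        have "cmat (A + B ** K) *v v = (\<i> * complex_of_real (Im c)) *s v" using cv c by simp
        then show False using limit_no_imag_eig[OF lim hur bd pdQ pdW] cv by blast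
      next
        case 2
        have "(\<lambda>j. A + B ** Ks j) \<longlonglongrightarrow> A + B ** K" by (intro tendsto_intros lim)
        then show False using limit_no_rhp_eig[of "\<lambda>j. A + B ** Ks j" "A + B ** K" v c] hur cv 2 by blast
      qed
    qed
  qed
  have le: "hinf_norm A B Bw Qi Ri K \<le> \<beta>"
    unfolding hinf_norm_def
  proof (rule cSUP_least)
    show "(UNIV::real set) \<noteq> {}" by simp
    fix \<omega> :: real
    show "onorm (\<lambda>v. T_inf A B Bw Qi Ri K (\<i> * complex_of_real \<omega>) *v v) \<le> \<beta>"
      by (rule limit_onorm_le[OF lim hur hurK bd]) (use b0 in simp)
  qed
  have "\<not> hinf_norm A B Bw Qi Ri K < \<beta>" using Kn hurK by (simp add: K_beta_def stab_set_def)
  then show "K \<in> {K \<in> stab_set A B. hinf_norm A B Bw Qi Ri K = \<beta>}"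
    using le hurK by (simp add: stab_set_def)
qed

end
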